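(* Let $\phi\in C^3((0,\infty))$, $\eta=\phi'$ and $\hat\eta(r)=\eta(r)+2\eta(2r)$, and suppose there are constants $0<a_0<\tilde r_1<\tilde r_2<2a_0$ and $a_1>a_0$ such that: $\eta'(r)>0$ for $0<r<\tilde r_1$ and $\eta'(r)<0$ for $r>\tilde r_1$; $\eta''(r)<0$ for $0<r<\tilde r_2$ and $\eta''(r)>0$ for $r>\tilde r_2$; $\hat\eta(r)<0$ for $0<r<a_0$ and $\hat\eta(r)>0$ for $r>a_0$; $\hat\eta'(r)>0$ for $0<r<a_1$ and $\hat\eta'(r)<0$ for $r>a_1$. Let $N,K$ be positive integers with $K<N-1$ and define $\hat{\mathbf\Psi}^F:(0,\infty)^{2N+1}\to\mathbb R^{2N+1}$ by $\hat\psi^F_j(\mathbf r)=\eta(r_j)+2\eta(2r_j)$ for $-N\le j\le -K$ and for $K\le j\le N$, and $\hat\psi^F_j(\mathbf r)=\eta(r_j)+\eta(r_j+r_{j-1})+\eta(r_j+r_{j+1})+[2\eta(2r_K)-\eta(r_K+r_{K-1})-\eta(r_K+r_{K+1})]$ for $-K+1\le j\le K-1$. Suppose $r_L,r_U$ satisfy $\tilde r_2/2<r_L<r_U$ and $\eta'(r_U)+12\eta'(2r_L)\ge0$. If $\mathbf\Phi=(\Phi_{-N},\dots,\Phi_N)\in\mathbb R^{2N+1}$ satisfies $\eta(r_L)+4\eta(2r_L)-2\eta(2r_U)<\Phi_j<\eta(r_U)+4\eta(2r_U)-2\eta(2r_L)$ for $j=-N,\dots,N$, then $\hat{\mathbf\Psi}^F(\mathbf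 r)=\mathbf\Phi$ has a unique solution $\mathbf r$ in $\Omega=(r_L,r_U)^{2N+1}$.
   Context: $\hat{\mathbf\Psi}^F$ is the (symmetrized) internal conjugate force of the force-based quasicontinuum approximation of a one-dimensional atomic chain with nearest and next-nearest neighbour interactions given by the pair potential $\phi$, and $\mathbf\Phi$ is an external conjugate force. *)

theory Defs
  imports "HOL-Analysis.Analysis"
begin

text \<open>Strains are indexed by the integers; only indices -N..N are relevant.
  psiF eta N K r j is the j-th component of the symmetrized force-based QC
  internal conjugate force.\<close>

definition psiF :: "(real \<Rightarrow> real) \<Rightarrow> int \<Rightarrow> int \<Rightarrow> (int \<Rightarrow> real) \<Rightarrow> int \<Rightarrow> real" where
  "psiF eta N K r j =
     (if (-N \<le> j \<and> j \<le> -K) \<or> (K \<le> j \<and> j \<le> N) then eta (r j) + 2 * eta (2 * r j)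
      else eta (r j) + eta (r j + r (j - 1)) + eta (r j + r (j + 1))
           + (2 * eta (2 * r K) - eta (r K + r (K - 1)) - eta (r K + r (K + 1))))"

text \<open>Omega = (rL, rU)^(2N+1), represented extensionally (value 0 outside -N..N).\<close>
definition Omega :: "int \<Rightarrow> real \<Rightarrow> real \<Rightarrow> (int \<Rightarrow> real) set" where
  "Omega N rL rU = {r. (\<forall>j\<in>{-N..N}. rL < r j \<and> r j < rU) \<and> (\<forall>j. j \<notin> {-N..N} \<longrightarrow> r j = 0)}"

end

theory Submission
  imports Defs
begin


lemma box_fix:
  fixes T :: "(int \<Rightarrow> real) \<Rightarrow> (int \<Rightarrow> real)"
  assumes fin: "finite I" and c: "0 \<le> c" "c < 1" and lohi: "lo \<le> hi"
  and S: "S = {x. (\<forall>j\<in>I. lo \<le> x j \<and> x j \<le> hi) \<and> (\<forall>j. j \<notin> I \<longrightarrow> x j = g j)}"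
  and maps: "\<And>x. x \<in> S \<Longrightarrow> T x \<in> S"
  and lip: "\<And>x y \<delta>. x \<in> S \<Longrightarrow> y \<in> S \<Longrightarrow> (\<forall>j\<in>I. \<bar>x j - y j\<bar> \<le> \<delta>) \<Longrightarrow> (\<forall>j\<in>I. \<bar>T x j - T y j\<bar> \<le> c * \<delta>)"
  shows "\<exists>!x. x \<in> S \<and> T x = x"
proof -
  define x0 where "x0 = (\<lambda>j. if j \<in> I then lo else g j)"
  have x0S: "x0 \<in> S" using S lohi x0_def by auto
  define xs where "xs n = (T^^n) x0" for n
  have xsS: "xs n \<in> S" for n by (induction n) (auto simp: xs_def x0S maps)
  have xsSuc: "xs (Suc n) = T (xs n)" for n by (simp add: xs_def)
  define D where "D = hi - lo"
  have D0: "D \<ge> 0" using lohi D_def by simp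
  have c1: "1 - c > 0" using c by simp
  have inS: "lo \<le> x j \<and> x j \<le> hi" if "x \<in> S" "j \<in> I" for x j using that S by auto
  have step: "\<forall>j\<in>I. \<bar>xs (Suc n) j - xs n j\<bar> \<le> c^n * D" for n
  proof (induction n)
    case 0
    then show ?case using inS[OF xsS] D_def by (auto simp: abs_le_iff) (smt (verit) inS xsS)+
  next
    case (Suc n)
    from lip[OF xsS xsS Suc.IH] show ?case by (simp add: xsSuc[of "Suc n"] xsSuc[of n] mult.assoc)
  qed
  have cb: "\<forall>j\<in>I. \<bar>xs (n+k) j - xs n j\<bar> \<le> D * c^n * (1 - c^k) / (1-c)" for n k
  proof (induction k)
    case 0 then show ?case by simp
  next
    case (Suc k)
    show ?case
    proof
      fix j assume j: "j \<in> I"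
      have "\<bar>xs (n + Suc k) j - xs n j\<bar> \<le> \<bar>xs (Suc (n+k)) j - xs (n+k) j\<bar> + \<bar>xs (n+k) j - xs n j\<bar>"
        by simp
      also have "\<dots> \<le> c^(n+k) * D + D * c^n * (1 - c^k) / (1-c)"
        using step[of "n+k"] Suc.IH j by (meson add_mono)
      also have "\<dots> = D * c^n * (1 - c^Suc k) / (1-c)"
        using c1 by (simp add: field_simps power_add)
      finally show "\<bar>xs (n + Suc k) j - xs n j\<bar> \<le> D * c ^ n * (1 - c ^ Suc k) / (1 - c)" .
    qed
  qed
  have cb2: "\<bar>xs m j - xs n j\<bar> \<le> D * c^n / (1-c)" if "n \<le> m" "j \<in> I" for m n j
  proof -
    have "\<bar>xs (n + (m-n)) j - xs n j\<bar> \<le> D * c^n * (1 - c^(m-n)) / (1-c)" using cb that by blast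
    also have "\<dots> \<le> D * c^n / (1-c)"
      using c1 c D0 by (intro divide_right_mono mult_left_le) (auto simp: zero_le_power)
    finally show ?thesis using that by simp
  qed
  have bnd0: "(\<lambda>n. D * c^n / (1-c)) \<longlonglongrightarrow> 0"
    using c by (intro tendsto_divide_zero tendsto_mult_right_zero LIMSEQ_power_zero) auto
  have cauchy: "Cauchy (\<lambda>n. xs n j)" if j: "j \<in> I" for j
  proof (rule metric_CauchyI)
    fix e :: real assume e: "e > 0"
    have "eventually (\<lambda>n. D * c^n / (1-c) < e) sequentially"
      using order_tendstoD(2)[OF bnd0 e] .
    then obtain M where M: "\<And>n. n \<ge> M \<Longrightarrow> D * c^n / (1-c) < e"
      unfolding eventually_sequentially by blast
    have "dist (xs m j) (xs n j) < e" if "m \<ge> M" "n \<ge> M" for m n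
    proof (cases "n \<le> m")
      case True
      then show ?thesis using cb2[OF True j] M[OF that(2)] by (simp add: dist_real_def)
    next
      case False
      then show ?thesis using cb2[of m n j] j M[OF that(1)] by (simp add: dist_real_def abs_minus_commute)
    qed
    then show "\<exists>M. \<forall>m\<ge>M. \<forall>n\<ge>M. dist (xs m j) (xs n j) < e" by blast
  qed
  define L where "L j = (if j \<in> I then lim (\<lambda>n. xs n j) else g j)" for j
  have conv: "(\<lambda>n. xs n j) \<longlonglongrightarrow> L j" if "j \<in> I" for j
    using cauchy[OF that] that unfolding L_def
    by (simp add: Cauchy_convergent_iff convergent_LIMSEQ_iff)
  have Lb: "\<bar>L j - xs n j\<bar> \<le> D * c^n / (1-c)" if j: "j \<in> I" for j n
  proof -
    have "(\<lambda>m. \<bar>xs m j - xs n j\<bar>) \<longlonglongrightarrow> \<bar>L j - xs n j\<bar>"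
      by (intro tendsto_intros conv j)
    then show ?thesis
      by (rule LIMSEQ_le_const2) (use cb2 j in blast)
  qed
  have LS: "L \<in> S"
  proof -
    have "lo \<le> L j \<and> L j \<le> hi" if j: "j \<in> I" for j
    proof
      show "lo \<le> L j" by (rule LIMSEQ_le_const[OF conv[OF j]]) (use inS[OF xsS] j in blast)
      show "L j \<le> hi" by (rule LIMSEQ_le_const2[OF conv[OF j]]) (use inS[OF xsS] j in blast)
    qed
    then show ?thesis using S L_def by auto
  qed
  have fixL: "T L = L"
  proof
    fix j show "T L j = L j"
    proof (cases "j \<in> I")
      case False
      then show ?thesis using maps[OF LS] LS S by auto
    next
      case j: True
      have "\<bar>T L j - L j\<bar> \<le> 2 * (D * c^n / (1-c))" for n
      proof -
        have a: "\<forall>i\<in>I. \<bar>L i - xs n i\<bar> \<le> D * c^n / (1-c)" using Lb by blast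
        have "\<bar>T L j - T (xs n) j\<bar> \<le> c * (D * c^n / (1-c))" using lip[OF LS xsS a] j by blast
        also have "\<dots> \<le> D * c^n / (1-c)" using c c1 D0
          by (intro mult_left_le_one_le) (auto intro!: divide_nonneg_pos)
        finally have b: "\<bar>T L j - T (xs n) j\<bar> \<le> D * c^n / (1-c)" .
        have "\<bar>L j - xs (Suc n) j\<bar> \<le> D * c^Suc n / (1-c)" using Lb[OF j] .
        also have "\<dots> \<le> D * c^n / (1-c)" using c c1 D0
          by (intro divide_right_mono mult_left_mono power_decreasing) auto
        finally have "\<bar>L j - xs (Suc n) j\<bar> \<le> D * c^n / (1-c)" .
        then show ?thesis using b xsSuc[of n] by auto
      qed
      moreover have "(\<lambda>n. 2 * (D * c^n / (1-c))) \<longlonglongrightarrow> 0"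
        using tendsto_mult_right_zero[OF bnd0, of 2] by (simp add: mult.commute)
      ultimately have "\<bar>T L j - L j\<bar> \<le> 0"
        by (intro LIMSEQ_le_const[of "\<lambda>n. 2 * (D * c^n / (1-c))" 0]) auto
      then show ?thesis by simp
    qed
  qed
  have uniq: "x = y" if x: "x \<in> S" "T x = x" and y: "y \<in> S" "T y = y" for x y
  proof -
    define \<delta> where "\<delta> = Max (insert 0 ((\<lambda>j. \<bar>x j - y j\<bar>) ` I))"
    have le: "\<bar>x j - y j\<bar> \<le> \<delta>" if "j \<in> I" for j
      unfolding \<delta>_def using fin that by (intro Max_ge) auto
    have d0: "0 \<le> \<delta>" unfolding \<delta>_def using fin by (intro Max_ge) auto
    have "\<forall>j\<in>I. \<bar>T x j - T y j\<bar> \<le> c * \<delta>" using lip[OF x(1) y(1)] le by blast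
    then have le2: "\<bar>x j - y j\<bar> \<le> c * \<delta>" if "j \<in> I" for j using x y that by simp
    have "\<delta> \<le> c * \<delta>" unfolding \<delta>_def[symmetric]
      using fin le2 d0 c by (subst \<delta>_def) (auto intro!: Max.boundedI)
    then have "\<delta> \<le> 0" using c d0 by (smt (verit) mult_le_cancel_right1)
    then have "x j = y j" for j using le[of j] x y S by (cases "j \<in> I") auto
    then show ?thesis by auto
  qed
  show ?thesis using LS fixL uniq by blast
qed


lemma mvt_bound:
  fixes f f' :: "real \<Rightarrow> real"
  assumes d: "\<And>z. lo \<le> z \<Longrightarrow> z \<le> hi \<Longrightarrow> (f has_real_derivative f' z) (at z)"
    and b: "\<And>z. lo \<le> z \<Longrightarrow> z \<le> hi \<Longrightarrow> m \<le> f' z \<and> f' z \<le> M"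
    and pq: "lo \<le> p" "p \<le> hi" "lo \<le> q" "q \<le> hi"
  shows "\<exists>t. m \<le> t \<and> t \<le> M \<and> f p - f q = t * (p - q)"
proof (cases p q rule: linorder_cases)
  case less
  obtain z where z: "p < z" "z < q" "f q - f p = (q - p) * f' z"
    using MVT2[OF less, of f f'] d pq by force
  show ?thesis using z b[of z] pq by (intro exI[of _ "f' z"]) (auto simp: algebra_simps)
next
  case equal
  then show ?thesis using b[of p] pq by (intro exI[of _ "f' p"]) auto
next
  case greater
  obtain z where z: "q < z" "z < p" "f p - f q = (p - q) * f' z"
    using MVT2[OF greater, of f f'] d pq by force
  show ?thesis using z b[of z] pq by (intro exI[of _ "f' z"]) (auto simp: algebra_simps)
qed

lemma clamp_lip: "(lo::real) \<le> hi \<Longrightarrow> \<bar>max lo (min hi u) - max lo (min hi v)\<bar> \<le> \<bar>u - v\<bar>"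
  by (auto simp: max_def min_def abs_if)

lemma clamp_fix:
  fixes lo hi x F B :: real
  assumes "lo < hi" "B > 0" "x = max lo (min hi (x - F / B))" "x = lo \<Longrightarrow> F < 0" "x = hi \<Longrightarrow> F > 0"
  shows "F = 0 \<and> lo < x \<and> x < hi"
proof -
  have s: "F / B < 0 \<longleftrightarrow> F < 0" "F / B > 0 \<longleftrightarrow> F > 0" "F / B = 0 \<longleftrightarrow> F = 0"
    using assms(2) by (auto simp: divide_less_0_iff zero_less_divide_iff)
  define v where "v = x - F / B"
  have x: "x = max lo (min hi v)" using assms(3) v_def by simp
  have "\<not> v \<le> lo"
  proof
    assume "v \<le> lo" then have "x = lo" using x assms(1) by simp
    then have "F < 0" using assms(4) by simp
    then show False using \<open>v \<le> lo\<close> \<open>x = lo\<close> s v_def by linarith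
  qed
  moreover have "\<not> v \<ge> hi"
  proof
    assume "v \<ge> hi" then have "x = hi" using x assms(1) by simp
    then have "F > 0" using assms(5) by simp
    then show False using \<open>v \<ge> hi\<close> \<open>x = hi\<close> s v_def by linarith
  qed
  ultimately have "x = v" "lo < v" "v < hi" using x by auto
  then show ?thesis using s v_def by auto
qed

lemma lip1:
  fixes d \<delta> A B e t1 t2 :: real
  assumes "\<bar>d\<bar> \<le> \<delta>" "A \<le> t1" "t1 \<le> B" "e \<le> t2" "t2 \<le> 0" "B > 0" "A + 4*e \<ge> 0"
  shows "\<bar>d - (t1*d + 2*(t2*(2*d)))/B\<bar> \<le> (1 - (A+4*e)/B) * \<delta>"
proof -
  define k where "k = 1 - (t1 + 4*t2)/B"
  have eq: "d - (t1*d + 2*(t2*(2*d)))/B = d * k" using assms(6) by (simp add: k_def field_simps)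
  have k0: "0 \<le> k" using assms by (simp add: k_def divide_le_eq_1)
  have k1: "k \<le> 1 - (A+4*e)/B" using assms unfolding k_def
    by (simp add: divide_right_mono)
  have "\<bar>d * k\<bar> = \<bar>d\<bar> * k" using k0 by (simp add: abs_mult)
  also have "\<dots> \<le> \<delta> * (1 - (A+4*e)/B)" using assms(1) k0 k1 by (intro mult_mono) auto
  finally show ?thesis using eq by (simp add: mult.commute)
qed

lemma lip2:
  fixes d0 dm dp dk \<delta> A B e t1 t2 t3 t4 :: real
  assumes "\<bar>d0\<bar> \<le> \<delta>" "\<bar>dm\<bar> \<le> \<delta>" "\<bar>dp\<bar> \<le> \<delta>" "\<bar>dk\<bar> \<le> \<delta>"
    "A \<le> t1" "t1 \<le> B" "e \<le> t2" "t2 \<le> 0" "e \<le> t3" "t3 \<le> 0" "e \<le> t4" "t4 \<le> 0" "B > 0"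
  shows "\<bar>d0 - (t1*d0 + t2*(d0+dm) + t3*(d0+dp) - t4*dk)/B\<bar> \<le> (1 - (A+5*e)/B) * \<delta>"
proof -
  have eq: "d0 - (t1*d0 + t2*(d0+dm) + t3*(d0+dp) - t4*dk)/B
      = (d0*(B - t1 - t2 - t3) + (-t2)*dm + (-t3)*dp + t4*dk)/B" using assms(13) by (simp add: field_simps)
  have nn: "B - t1 - t2 - t3 \<ge> 0" using assms by linarith
  have a1: "\<bar>d0*(B - t1 - t2 - t3)\<bar> \<le> \<delta> * (B - t1 - t2 - t3)"
    unfolding abs_mult abs_of_nonneg[OF nn] by (rule mult_right_mono) (use assms nn in auto)
  have a2: "\<bar>(-t2)*dm\<bar> \<le> (-e) * \<delta>" unfolding abs_mult by (rule mult_mono) (use assms in auto)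
  have a3: "\<bar>(-t3)*dp\<bar> \<le> (-e) * \<delta>" unfolding abs_mult by (rule mult_mono) (use assms in auto)
  have a4: "\<bar>t4*dk\<bar> \<le> (-e) * \<delta>" unfolding abs_mult by (rule mult_mono) (use assms in auto)
  have d0: "0 \<le> \<delta>" using assms(1) by linarith
  have a5: "\<delta> * (B - t1 - t2 - t3) \<le> \<delta> * (B - A - 2*e)" using assms d0 by (intro mult_left_mono) auto
  have a6: "\<delta> * (B - A - 5*e) = \<delta> * (B - A - 2*e) + 3 * ((-e) * \<delta>)" by (simp add: algebra_simps)
  have "\<bar>d0*(B - t1 - t2 - t3) + (-t2)*dm + (-t3)*dp + t4*dk\<bar> \<le> \<delta> * (B - A - 5*e)"
  proof -
    have t: "\<bar>a + b + c + d\<bar> \<le> \<bar>a\<bar> + \<bar>b\<bar> + \<bar>c\<bar> + \<bar>d\<bar>" for a b c d :: real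
      using abs_triangle_ineq[of "a+b+c" d] abs_triangle_ineq[of "a+b" c] abs_triangle_ineq[of a b] by linarith
    show ?thesis using t[of "d0*(B - t1 - t2 - t3)" "(-t2)*dm" "(-t3)*dp" "t4*dk"] a1 a2 a3 a4 a5 a6 by linarith
  qed
  then have "\<bar>d0*(B - t1 - t2 - t3) + (-t2)*dm + (-t3)*dp + t4*dk\<bar> / B \<le> \<delta> * (B - A - 5*e) / B"
    using assms(13) by (intro divide_right_mono) auto
  then have "\<bar>(d0*(B - t1 - t2 - t3) + (-t2)*dm + (-t3)*dp + t4*dk)/B\<bar> \<le> \<delta> * (B - A - 5*e) / B"
    using assms(13) by (simp add: abs_divide)
  also have "\<dots> = (1 - (A+5*e)/B) * \<delta>" using assms(13) by (simp add: field_simps)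
  finally show ?thesis using eq by simp
qed



theorem theorem4p5:
  fixes phi eta eta1 eta2 :: "real \<Rightarrow> real"
    and a0 r1 r2 a1 rL rU :: real and N K :: int and Phi :: "int \<Rightarrow> real"
  assumes d1: "\<And>r. r > 0 \<Longrightarrow> (phi has_real_derivative eta r) (at r)"
    and d2: "\<And>r. r > 0 \<Longrightarrow> (eta has_real_derivative eta1 r) (at r)"
    and d3: "\<And>r. r > 0 \<Longrightarrow> (eta1 has_real_derivative eta2 r) (at r)"
    and c3: "continuous_on {0<..} eta2"
    and hc: "0 < a0" "a0 < r1" "r1 < r2" "r2 < 2 * a0" "a1 > a0"
    and h1: "\<And>r. 0 < r \<Longrightarrow> r < r1 \<Longrightarrow> eta1 r > 0" "\<And>r. r > r1 \<Longrightarrow> eta1 r < 0"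
    and h2: "\<And>r. 0 < r \<Longrightarrow> r < r2 \<Longrightarrow> eta2 r < 0" "\<And>r. r > r2 \<Longrightarrow> eta2 r > 0"
    and h3: "\<And>r. 0 < r \<Longrightarrow> r < a0 \<Longrightarrow> eta r + 2 * eta (2 * r) < 0"
            "\<And>r. r > a0 \<Longrightarrow> eta r + 2 * eta (2 * r) > 0"
    and h4: "\<And>r. 0 < r \<Longrightarrow> r < a1 \<Longrightarrow> eta1 r + 4 * eta1 (2 * r) > 0"
            "\<And>r. r > a1 \<Longrightarrow> eta1 r + 4 * eta1 (2 * r) < 0"
    and NK: "0 < N" "0 < K" "K < N - 1"
    and rLU: "r2 / 2 < rL" "rL < rU" "eta1 rU + 12 * eta1 (2 * rL) \<ge> 0"
    and Phib: "\<And>j. -N \<le> j \<Longrightarrow> j \<le> N \<Longrightarrow>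
        eta rL + 4 * eta (2 * rL) - 2 * eta (2 * rU) < Phi j \<and>
        Phi j < eta rU + 4 * eta (2 * rU) - 2 * eta (2 * rL)"
  shows "\<exists>!r. r \<in> Omega N rL rU \<and> (\<forall>j\<in>{-N..N}. psiF eta N K r j = Phi j)"
proof -
  have r2pos: "0 < r2" using hc by linarith
  have rL0: "0 < rL" using rLU r2pos by linarith
  define A where "A = eta1 rU"
  define B where "B = eta1 rL"
  define e where "e = eta1 (2*rL)"
  have e0: "e < 0" unfolding e_def by (rule h1(2)) (use hc rLU in linarith)
  have A0: "A > 0" using rLU(3) e0 A_def e_def by linarith
  have A12: "A + 12 * e \<ge> 0" using rLU(3) A_def e_def by linarith
  have rUr2: "rU \<le> r2"
  proof (rule ccontr)
    assume "\<not> rU \<le> r2"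
    then have "eta1 rU < 0" using h1(2) hc by auto
    then show False using A0 A_def by simp
  qed
  have dec1: "eta1 q < eta1 p" if pq: "0 < p" "p < q" "q \<le> r2" for p q
  proof -
    obtain z where z: "p < z" "z < q" "eta1 q - eta1 p = (q - p) * eta2 z"
      using MVT2[OF pq(2), of eta1 eta2] d3 pq by force
    have "eta2 z < 0" using h2(1) z pq by auto
    then have "(q - p) * eta2 z < 0" using pq by (simp add: mult_pos_neg)
    then show ?thesis using z by simp
  qed
  have inc1: "eta1 p < eta1 q" if pq: "r2 \<le> p" "p < q" for p q
  proof -
    obtain z where z: "p < z" "z < q" "eta1 q - eta1 p = (q - p) * eta2 z"
      using MVT2[OF pq(2), of eta1 eta2] d3 pq r2pos by force
    have "eta2 z > 0" using h2(2) z pq by auto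
    then have "(q - p) * eta2 z > 0" using pq by simp
    then show ?thesis using z by simp
  qed
  have bA: "A \<le> eta1 z \<and> eta1 z \<le> B" if "rL \<le> z" "z \<le> rU" for z
  proof
    show "A \<le> eta1 z" unfolding A_def
      using dec1[of z rU] that rL0 rUr2 by (cases "z = rU") auto
    show "eta1 z \<le> B" unfolding B_def
      using dec1[of rL z] that rL0 rUr2 by (cases "z = rL") auto
  qed
  have BA: "A \<le> B" using bA[of rL] rLU by simp
  have B0: "B > 0" using BA A0 by simp
  have bE: "e \<le> eta1 z \<and> eta1 z \<le> 0" if "2*rL \<le> z" for z
  proof
    show "e \<le> eta1 z" unfolding e_def
      using inc1[of "2*rL" z] that rLU by (cases "z = 2*rL") auto
    show "eta1 z \<le> 0" using h1(2)[of z] that rLU hc by auto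
  qed
  have mA: "\<exists>t. A \<le> t \<and> t \<le> B \<and> eta p - eta q = t*(p-q)"
    if "rL \<le> p" "p \<le> rU" "rL \<le> q" "q \<le> rU" for p q
    by (rule mvt_bound[where lo=rL and hi=rU and f'=eta1]) (use d2 rL0 bA that in auto)
  have mE: "\<exists>t. e \<le> t \<and> t \<le> 0 \<and> eta p - eta q = t*(p-q)"
    if "2*rL \<le> p" "2*rL \<le> q" for p q
    by (rule mvt_bound[where lo="2*rL" and hi="max p q" and f'=eta1]) (use d2 rL0 bE that in auto)
  have mono: "eta q \<le> eta p" if pre: "2*rL \<le> p" "p \<le> q" for p q
  proof -
    obtain t where t: "e \<le> t" "t \<le> 0" "eta q - eta p = t*(q-p)" using mE[of q p] pre by auto
    have "t*(q-p) \<le> 0" using t pre by (simp add: mult_nonpos_nonneg)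
    then show ?thesis using t by simp
  qed
  define PL where "PL = eta rL + 4 * eta (2 * rL) - 2 * eta (2 * rU)"
  define PU where "PU = eta rU + 4 * eta (2 * rU) - 2 * eta (2 * rL)"
  have Pb: "PL < Phi j \<and> Phi j < PU" if "-N \<le> j" "j \<le> N" for j
    using Phib[OF that] PL_def PU_def by simp
  have e2: "eta (2*rU) \<le> eta (2*rL)" using mono rLU by simp
  define hat where "hat x = eta x + 2 * eta (2 * x)" for x
  have hatd: "\<exists>t1 t2. A \<le> t1 \<and> t1 \<le> B \<and> e \<le> t2 \<and> t2 \<le> 0 \<and> hat p - hat q = t1*(p-q) + 2*(t2*(2*(p-q)))"
    if pre: "rL \<le> p" "p \<le> rU" "rL \<le> q" "q \<le> rU" for p q
  proof -
    obtain t1 where t1: "A \<le> t1" "t1 \<le> B" "eta p - eta q = t1*(p-q)" using mA pre by blast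
    obtain t2 where t2: "e \<le> t2" "t2 \<le> 0" "eta (2*p) - eta (2*q) = t2*(2*p-2*q)" using mE[of "2*p" "2*q"] pre by auto
    show ?thesis using t1 t2 unfolding hat_def by (intro exI[of _ t1] exI[of _ t2]) (auto simp: algebra_simps)
  qed
  have hat_inj: "p = q" if pre: "rL \<le> p" "p \<le> rU" "rL \<le> q" "q \<le> rU" "hat p = hat q" for p q
  proof -
    obtain t1 t2 where t: "A \<le> t1" "e \<le> t2" "hat p - hat q = t1*(p-q) + 2*(t2*(2*(p-q)))"
      using hatd pre(1-4) by blast
    have "(t1 + 4*t2) * (p - q) = 0" using t pre(5) by (simp add: algebra_simps)
    moreover have "t1 + 4*t2 > 0" using t A12 e0 by linarith
    ultimately show ?thesis by simp
  qed
  \<comment> \<open>Stage 1: the decoupled outer equations\<close>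
  define Ou where "Ou = {j::int. (-N \<le> j \<and> j \<le> -K) \<or> (K \<le> j \<and> j \<le> N)}"
  have finO: "finite Ou" by (rule finite_subset[of _ "{-N..N}"]) (use NK in \<open>auto simp: Ou_def\<close>)
  define S1 where "S1 = {x. (\<forall>j\<in>Ou. rL \<le> x j \<and> x j \<le> rU) \<and> (\<forall>j. j \<notin> Ou \<longrightarrow> x j = (\<lambda>_. 0::real) j)}"
  define T1 where "T1 x = (\<lambda>j. if j \<in> Ou then max rL (min rU (x j - (hat (x j) - Phi j) / B)) else 0)" for x
  define c1 where "c1 = 1 - (A + 4*e)/B"
  have c1: "0 \<le> c1" "c1 < 1" using A12 e0 BA B0 A0 unfolding c1_def
    by (auto simp: divide_le_eq_1 field_simps)
  have "\<exists>!x. x \<in> S1 \<and> T1 x = x"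
  proof (rule box_fix[OF finO c1 _ S1_def])
    show "rL \<le> rU" using rLU by simp
    show "T1 x \<in> S1" if "x \<in> S1" for x using rLU by (auto simp: S1_def T1_def)
    show "\<forall>j\<in>Ou. \<bar>T1 x j - T1 y j\<bar> \<le> c1 * \<delta>"
      if x: "x \<in> S1" and y: "y \<in> S1" and d: "\<forall>j\<in>Ou. \<bar>x j - y j\<bar> \<le> \<delta>" for x y \<delta>
    proof
      fix j assume j: "j \<in> Ou"
      obtain t1 t2 where t: "A \<le> t1" "t1 \<le> B" "e \<le> t2" "t2 \<le> 0"
        "hat (x j) - hat (y j) = t1*(x j - y j) + 2*(t2*(2*(x j - y j)))"
        using hatd[of "x j" "y j"] x y j by (auto simp: S1_def)
      have "\<bar>T1 x j - T1 y j\<bar> \<le> \<bar>(x j - (hat (x j) - Phi j) / B) - (y j - (hat (y j) - Phi j) / B)\<bar>"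
        using j rLU by (simp add: T1_def clamp_lip)
      also have "(x j - (hat (x j) - Phi j) / B) - (y j - (hat (y j) - Phi j) / B)
          = (x j - y j) - (hat (x j) - hat (y j)) / B" by (simp add: diff_divide_distrib)
      also have "\<bar>\<dots>\<bar> \<le> c1 * \<delta>" unfolding t(5) c1_def
        by (rule lip1) (use t d j B0 A12 e0 in auto)
      finally show "\<bar>T1 x j - T1 y j\<bar> \<le> c1 * \<delta>" .
    qed
  qed
  then obtain x1 where x1: "x1 \<in> S1" "T1 x1 = x1" by blast
  have x1sol: "hat (x1 j) = Phi j \<and> rL < x1 j \<and> x1 j < rU" if j: "j \<in> Ou" for j
  proof -
    have jN: "-N \<le> j" "j \<le> N" using j NK using NK unfolding Ou_def by auto
    have "hat (x1 j) - Phi j = 0 \<and> rL < x1 j \<and> x1 j < rU"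
    proof (rule clamp_fix[OF _ B0])
      show "rL < rU" using rLU by simp
      show "x1 j = max rL (min rU (x1 j - (hat (x1 j) - Phi j) / B))"
        using fun_cong[OF x1(2), of j] j by (simp add: T1_def)
      show "hat (x1 j) - Phi j < 0" if "x1 j = rL"
        using that Pb[OF jN] e2 unfolding hat_def PL_def by simp
      show "hat (x1 j) - Phi j > 0" if "x1 j = rU"
        using that Pb[OF jN] e2 unfolding hat_def PU_def by simp
    qed
    then show ?thesis by simp
  qed
  \<comment> \<open>Stage 2: the coupled interior equations\<close>
  define I where "I = {-K+1..K-1}"
  have finI: "finite I" by (simp add: I_def)
  have IO: "j \<notin> Ou" if "j \<in> I" for j using that by (auto simp: I_def Ou_def)
  have OI: "j \<in> Ou" if "j \<notin> I" "-N \<le> j" "j \<le> N" for j using that by (auto simp: I_def Ou_def)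
  have IN: "-N \<le> j \<and> j \<le> N" if "j \<in> I" for j using that NK by (auto simp: I_def)
  define G where "G x j = psiF eta N K x j - Phi j" for x j
  have Gin: "G x j = eta (x j) + eta (x j + x (j-1)) + eta (x j + x (j+1))
      + (2 * eta (2 * x K) - eta (x K + x (K-1)) - eta (x K + x (K+1))) - Phi j" if "j \<in> I" for x j
    using that by (auto simp: G_def psiF_def I_def)
  have Gout: "psiF eta N K x j = hat (x j)" if "j \<in> Ou" for x j
    using that by (auto simp: psiF_def Ou_def hat_def)
  define S2 where "S2 = {x. (\<forall>j\<in>I. rL \<le> x j \<and> x j \<le> rU) \<and> (\<forall>j. j \<notin> I \<longrightarrow> x j = x1 j)}"
  define T2 where "T2 x = (\<lambda>j. if j \<in> I then max rL (min rU (x j - G x j / B)) else x1 j)" for x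
  define c2 where "c2 = 1 - (A + 5*e)/B"
  have c2: "0 \<le> c2" "c2 < 1" using A12 e0 BA B0 A0 unfolding c2_def
    by (auto simp: divide_le_eq_1 field_simps)
  have box2: "rL \<le> x i \<and> x i \<le> rU" if "x \<in> S2" "-N \<le> i" "i \<le> N" for x i
  proof (cases "i \<in> I")
    case True then show ?thesis using that by (auto simp: S2_def)
  next
    case False then show ?thesis using that x1sol[OF OI[OF False that(2,3)]] by (auto simp: S2_def)
  qed
  have KI: "K \<notin> I" "K+1 \<notin> I" "K - 1 \<in> I" using NK by (auto simp: I_def)
  have KN: "-N \<le> K" "K \<le> N" "-N \<le> K+1" "K+1 \<le> N" "-N \<le> K-1" "K-1 \<le> N" using NK by auto
  have "\<exists>!x. x \<in> S2 \<and> T2 x = x"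
  proof (rule box_fix[OF finI c2 _ S2_def])
    show "rL \<le> rU" using rLU by simp
    show "T2 x \<in> S2" if "x \<in> S2" for x using rLU by (auto simp: S2_def T2_def)
    show "\<forall>j\<in>I. \<bar>T2 x j - T2 y j\<bar> \<le> c2 * \<delta>"
      if x: "x \<in> S2" and y: "y \<in> S2" and d: "\<forall>j\<in>I. \<bar>x j - y j\<bar> \<le> \<delta>" for x y \<delta>
    proof
      fix j assume j: "j \<in> I"
      have dall: "\<bar>x i - y i\<bar> \<le> \<delta>" for i
      proof (cases "i \<in> I")
        case True then show ?thesis using d by blast
      next
        case False
        have "\<bar>x j - y j\<bar> \<le> \<delta>" using d j by blast
        then show ?thesis using False x y by (auto simp: S2_def)
      qed
      have xK: "x K = y K" "x (K+1) = y (K+1)" using KI x y by (auto simp: S2_def)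
      have jN: "-N \<le> j-1" "j-1 \<le> N" "-N \<le> j+1" "j+1 \<le> N" using j NK by (auto simp: I_def)
      note bx = box2[OF x] and bY = box2[OF y]
      have jN0: "-N \<le> j" "j \<le> N" using IN[OF j] by auto
      obtain t1 where t1: "A \<le> t1" "t1 \<le> B" "eta (x j) - eta (y j) = t1*(x j - y j)"
        using mA[of "x j" "y j"] bx[OF jN0] bY[OF jN0] by auto
      obtain t2 where t2: "e \<le> t2" "t2 \<le> 0" "eta (x j + x (j-1)) - eta (y j + y (j-1)) = t2*((x j + x (j-1)) - (y j + y (j-1)))"
        using mE[of "x j + x (j-1)" "y j + y (j-1)"] bx[OF jN0] bY[OF jN0] bx[OF jN(1,2)] bY[OF jN(1,2)] by auto
      obtain t3 where t3: "e \<le> t3" "t3 \<le> 0" "eta (x j + x (j+1)) - eta (y j + y (j+1)) = t3*((x j + x (j+1)) - (y j + y (j+1)))"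
        using mE[of "x j + x (j+1)" "y j + y (j+1)"] bx[OF jN0] bY[OF jN0] bx[OF jN(3,4)] bY[OF jN(3,4)] by auto
      obtain t4 where t4: "e \<le> t4" "t4 \<le> 0" "eta (x K + x (K-1)) - eta (x K + y (K-1)) = t4*((x K + x (K-1)) - (x K + y (K-1)))"
        using mE[of "x K + x (K-1)" "x K + y (K-1)"] bx[OF KN(1,2)] bx[OF KN(5,6)] bY[OF KN(5,6)] by auto
      have Gd: "G x j - G y j = t1*(x j - y j) + t2*((x j - y j) + (x (j-1) - y (j-1)))
          + t3*((x j - y j) + (x (j+1) - y (j+1))) - t4*(x (K-1) - y (K-1))"
        using t1(3) t2(3) t3(3) t4(3) unfolding Gin[OF j, of x] Gin[OF j, of y] xK[symmetric]
        by (simp add: algebra_simps)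
      have "\<bar>T2 x j - T2 y j\<bar> \<le> \<bar>(x j - G x j / B) - (y j - G y j / B)\<bar>"
        using j rLU by (simp add: T2_def clamp_lip)
      also have "(x j - G x j / B) - (y j - G y j / B) = (x j - y j) - (G x j - G y j) / B"
        by (simp add: diff_divide_distrib)
      also have "\<bar>\<dots>\<bar> \<le> c2 * \<delta>" unfolding Gd c2_def
        by (rule lip2) (use t1 t2 t3 t4 dall B0 in auto)
      finally show "\<bar>T2 x j - T2 y j\<bar> \<le> c2 * \<delta>" .
    qed
  qed
  then obtain x2 where x2: "x2 \<in> S2" "T2 x2 = x2" and x2u: "\<And>y. y \<in> S2 \<Longrightarrow> T2 y = y \<Longrightarrow> y = x2"
    by blast
  have x2sol: "G x2 j = 0 \<and> rL < x2 j \<and> x2 j < rU" if j: "j \<in> I" for j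
  proof (rule clamp_fix[OF _ B0])
    have jN: "-N \<le> j-1" "j-1 \<le> N" "-N \<le> j+1" "j+1 \<le> N" using j NK by (auto simp: I_def)
    note bx = box2[OF x2(1)]
    have jN0: "-N \<le> j" "j \<le> N" using IN[OF j] by auto
    show "rL < rU" using rLU by simp
    show "x2 j = max rL (min rU (x2 j - G x2 j / B))"
      using fun_cong[OF x2(2), of j] j by (simp add: T2_def)
    show "G x2 j < 0" if "x2 j = rL"
    proof -
      have "eta (x2 j + x2 (j-1)) \<le> eta (2*rL)" using mono[of "2*rL"] bx[OF jN(1,2)] that by simp
      moreover have "eta (x2 j + x2 (j+1)) \<le> eta (2*rL)" using mono[of "2*rL"] bx[OF jN(3,4)] that by simp
      moreover have "eta (2 * x2 K) \<le> eta (2*rL)" using mono[of "2*rL"] bx[OF KN(1,2)] by simp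
      moreover have "eta (2*rU) \<le> eta (x2 K + x2 (K-1))"
        using mono[of "x2 K + x2 (K-1)" "2*rU"] bx[OF KN(1,2)] bx[OF KN(5,6)] by simp
      moreover have "eta (2*rU) \<le> eta (x2 K + x2 (K+1))"
        using mono[of "x2 K + x2 (K+1)" "2*rU"] bx[OF KN(1,2)] bx[OF KN(3,4)] by simp
      ultimately show ?thesis using Pb[OF jN0] that unfolding Gin[OF j] PL_def by simp
    qed
    show "G x2 j > 0" if "x2 j = rU"
    proof -
      have "eta (2*rU) \<le> eta (x2 j + x2 (j-1))" using mono[of _ "2*rU"] bx[OF jN(1,2)] that by simp
      moreover have "eta (2*rU) \<le> eta (x2 j + x2 (j+1))" using mono[of _ "2*rU"] bx[OF jN(3,4)] that by simp
      moreover have "eta (2*rU) \<le> eta (2 * x2 K)" using mono[of _ "2*rU"] bx[OF KN(1,2)] by simp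
      moreover have "eta (x2 K + x2 (K-1)) \<le> eta (2*rL)"
        using mono[of "2*rL" "x2 K + x2 (K-1)"] bx[OF KN(1,2)] bx[OF KN(5,6)] by simp
      moreover have "eta (x2 K + x2 (K+1)) \<le> eta (2*rL)"
        using mono[of "2*rL" "x2 K + x2 (K+1)"] bx[OF KN(1,2)] bx[OF KN(3,4)] by simp
      ultimately show ?thesis using Pb[OF jN0] that unfolding Gin[OF j] PU_def by simp
    qed
  qed
  have x2O: "x2 j = x1 j" if "j \<notin> I" for j using x2(1) that by (auto simp: S2_def)
  have x1out: "x1 j = 0" if "j \<notin> Ou" for j using x1(1) that by (auto simp: S1_def)
  have sol: "x2 \<in> Omega N rL rU \<and> (\<forall>j\<in>{-N..N}. psiF eta N K x2 j = Phi j)"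
  proof -
    have "rL < x2 j \<and> x2 j < rU" if "j \<in> {-N..N}" for j
    proof (cases "j \<in> I")
      case True then show ?thesis using x2sol by blast
    next
      case False then show ?thesis using x2O x1sol OI that by auto
    qed
    moreover have "x2 j = 0" if "j \<notin> {-N..N}" for j
    proof -
      have "j \<notin> I" using IN that by auto
      moreover have "j \<notin> Ou" using that using NK unfolding Ou_def by auto
      ultimately show ?thesis using x2O x1out by simp
    qed
    moreover have "psiF eta N K x2 j = Phi j" if "j \<in> {-N..N}" for j
    proof (cases "j \<in> I")
      case True then show ?thesis using x2sol[OF True] by (simp add: G_def)
    next
      case False
      then have "j \<in> Ou" using OI that by auto
      then show ?thesis using Gout x2O[OF False] x1sol by simp
    qed
    ultimately show ?thesis by (auto simp: Omega_def)
  qed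
  have uni: "r = x2" if r: "r \<in> Omega N rL rU" "\<forall>j\<in>{-N..N}. psiF eta N K r j = Phi j" for r
  proof (rule x2u)
    have rb: "rL < r j \<and> r j < rU" if "-N \<le> j" "j \<le> N" for j using r(1) that by (auto simp: Omega_def)
    have rO: "r j = x1 j" if "j \<notin> I" for j
    proof (cases "-N \<le> j \<and> j \<le> N")
      case True
      then have jO: "j \<in> Ou" using OI that by auto
      have "hat (r j) = Phi j" using r(2) Gout[OF jO, of r] True by simp
      then have "hat (r j) = hat (x1 j)" using x1sol[OF jO] by simp
      then show ?thesis using hat_inj[of "r j" "x1 j"] rb[of j] True x1sol[OF jO] by (simp add: less_imp_le)
    next
      case False
      then have "r j = 0" using r(1) by (auto simp: Omega_def)
      moreover have "j \<notin> Ou" using False using NK unfolding Ou_def by auto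
      ultimately show ?thesis using x1out by simp
    qed
    show rS: "r \<in> S2" using rb IN rO by (auto simp: S2_def less_imp_le)
    show "T2 r = r"
    proof
      fix j show "T2 r j = r j"
      proof (cases "j \<in> I")
        case True
        have "G r j = 0" using r(2) IN[OF True] by (simp add: G_def)
        then show ?thesis using True rb[of j] IN[OF True] by (simp add: T2_def)
      next
        case False then show ?thesis using rO by (simp add: T2_def)
      qed
    qed
  qed
  show ?thesis using sol uni by blast
qed

end
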